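(* Let $K_0,K_1>0$, $\alpha\geq-2$ and $p>1$. Let $F\in\mathcal{C}^2([0,T))$ satisfy $$\ddot F(t)+K_0(1+t)^{-1}\dot F(t)\geq K_1(1+t)^{\alpha}|F(t)|^p\quad\text{for all } t\in[0,T).$$ If $F(0)>0$ and $\dot F(0)>0$, then $T<\infty$, i.e. $F$ blows up in finite time (cannot be extended as such a function to all of $[0,\infty)$). *)

theory Defs
  imports "HOL-Analysis.Analysis"
begin

end

theory Submission
  imports Defs
begin

lemma at_pos: "(t::real) > 0 \<Longrightarrow> at t within {0..} = at t"
  by (rule at_within_interior) auto

lemma cont_aux:
  assumes D: "\<And>t. t \<ge> 0 \<Longrightarrow> (g has_real_derivative g' t) (at t within {0..})"
  shows "continuous_on {0..} g"
  using D DERIV_continuous continuous_on_eq_continuous_within by blast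

lemma mono_aux:
  fixes g g' :: "real \<Rightarrow> real"
  assumes D: "\<And>t. t \<ge> 0 \<Longrightarrow> (g has_real_derivative g' t) (at t within {0..})"
    and P: "\<And>t. t \<ge> a \<Longrightarrow> g' t \<ge> 0" and "0 \<le> a" "a \<le> b"
  shows "g a \<le> g b"
proof (rule DERIV_nonneg_imp_increasing_open[OF \<open>a \<le> b\<close>])
  fix x assume "a < x" "x < b"
  then have "x > 0" using \<open>0 \<le> a\<close> by auto
  then show "\<exists>y. DERIV g x :> y \<and> y \<ge> 0"
    using D[of x] P[of x] at_pos[of x] \<open>a < x\<close> by auto
next
  show "continuous_on {a..b} g"
    using cont_aux[OF D] continuous_on_subset \<open>0 \<le> a\<close> by fastforce
qed

lemma persist_aux:
  fixes g g' :: "real \<Rightarrow> real"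
  assumes D: "\<And>t. t \<ge> 0 \<Longrightarrow> (g has_real_derivative g' t) (at t within {0..})"
    and P: "\<And>t. t \<ge> t1 \<Longrightarrow> g t \<le> 0 \<Longrightarrow> g' t > 0" and "0 \<le> t1" "g t1 > 0"
    and "t2 \<ge> t1"
  shows "g t2 > 0"
proof (rule ccontr)
  assume "\<not> g t2 > 0"
  define S where "S = {t1..t2} \<inter> g -` {..0}"
  have cS: "closed S" unfolding S_def
    by (rule continuous_closed_preimage) (use cont_aux[OF D] continuous_on_subset \<open>0 \<le> t1\<close> in fastforce)+
  have "t2 \<in> S" using \<open>\<not> g t2 > 0\<close> \<open>t2 \<ge> t1\<close> unfolding S_def by auto
  hence ne: "S \<noteq> {}" by auto
  have bb: "bdd_below S" unfolding S_def by auto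
  define s where "s = Inf S"
  have sS: "s \<in> S" using closed_contains_Inf[OF ne bb cS] s_def by simp
  hence s1: "t1 \<le> s" "g s \<le> 0" unfolding S_def by auto
  have "s \<noteq> t1" using s1 \<open>g t1 > 0\<close> by auto
  hence "s > t1" using s1 by auto
  hence "s > 0" using \<open>0 \<le> t1\<close> by auto
  have "DERIV g s :> g' s" using D[of s] at_pos[OF \<open>s > 0\<close>] \<open>s > 0\<close> by auto
  then obtain d where d: "d > 0" "\<And>h. h > 0 \<Longrightarrow> h < d \<Longrightarrow> g (s - h) < g s"
    using DERIV_pos_inc_left P[OF s1] by blast
  define h where "h = min (d/2) ((s - t1)/2)"
  have st2: "s \<le> t2" using sS unfolding S_def by auto
  have H: "h \<le> (s - t1)/2" "h \<le> d/2" unfolding h_def by (rule min.cobounded2, rule min.cobounded1)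
  have H2: "h > 0" unfolding h_def using d(1) \<open>s > t1\<close> by simp
  have h: "h > 0" "h < d" "s - h \<ge> t1" "s - h \<le> t2"
    using H H2 d(1) \<open>s > t1\<close> st2 by auto
  have "s - h \<in> S" using d(2)[OF h(1,2)] s1 h unfolding S_def by auto
  hence "s \<le> s - h" unfolding s_def using bb by (rule cInf_lower)
  thus False using h by auto
qed


lemma powr_within:
  fixes g :: "real \<Rightarrow> real"
  assumes "(g has_real_derivative m) (at t within S)" "g t > 0"
  shows "((\<lambda>x. g x powr r) has_real_derivative r * g t powr (r - 1) * m) (at t within S)"
  using DERIV_chain2[OF has_real_derivative_powr[OF assms(2)] assms(1)] by simp

theorem lemma7p1:
  fixes F F' F'' :: "real \<Rightarrow> real" and K0 K1 \<alpha> p :: real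
  assumes "K0 > 0" and "K1 > 0" and "\<alpha> \<ge> -2" and "p > 1"
    and "\<And>t. t \<ge> 0 \<Longrightarrow> (F has_real_derivative F' t) (at t within {0..})"
    and "\<And>t. t \<ge> 0 \<Longrightarrow> (F' has_real_derivative F'' t) (at t within {0..})"
    and "continuous_on {0..} F''"
    and "\<And>t. t \<ge> 0 \<Longrightarrow>
           F'' t + K0 * (1 + t) powr (-1) * F' t \<ge> K1 * (1 + t) powr \<alpha> * \<bar>F t\<bar> powr p"
    and "F 0 > 0" and "F' 0 > 0"
  shows False
proof -
  note F1 = assms(5) and F2 = assms(6) and ineq = assms(8)
  define c where "c = K0 - 1"
  define X where "X t = (1+t) * F' t" for t
  define X' where "X' t = F' t + (1+t) * F'' t" for t
  have DX: "(X has_real_derivative X' t) (at t within {0..})" if "t \<ge> 0" for t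
    unfolding X_def[abs_def] X'_def using F2[OF that] by (auto intro!: derivative_eq_intros)
  have D: "(1+t) * X' t \<ge> K1 * \<bar>F t\<bar> powr p - c * X t" if "t \<ge> 0" for t
  proof -
    define u where "u = 1 + t"
    have u: "u \<ge> 1" using that u_def by simp
    have i: "F'' t + K0 * u powr (-1) * F' t \<ge> K1 * u powr \<alpha> * \<bar>F t\<bar> powr p"
      using ineq[OF that] u_def by simp
    have "u^2 * (K1 * u powr \<alpha> * \<bar>F t\<bar> powr p) \<le> u^2 * (F'' t + K0 * u powr (-1) * F' t)"
      using i by (simp add: mult_left_mono)
    moreover have "u^2 * (F'' t + K0 * u powr (-1) * F' t) = u^2 * F'' t + K0 * u * F' t"
      using u by (simp add: powr_minus power2_eq_square field_simps)
    moreover have "u^2 * (K1 * u powr \<alpha> * \<bar>F t\<bar> powr p) = K1 * \<bar>F t\<bar> powr p * u powr (\<alpha> + 2)"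
      using u by (simp add: powr_add powr_numeral mult_ac)
    moreover have "u powr (\<alpha> + 2) \<ge> 1" using u assms(3) by (simp add: ge_one_powr_ge_zero)
    moreover have "K1 * \<bar>F t\<bar> powr p \<ge> 0" using assms(2) by simp
    ultimately have "u^2 * F'' t + K0 * u * F' t \<ge> K1 * \<bar>F t\<bar> powr p"
      by (smt (verit) mult_left_mono mult_cancel_left1)
    thus ?thesis unfolding X'_def X_def c_def u_def[symmetric] by (simp add: algebra_simps power2_eq_square)
  qed
  have g1: "(1+t) powr c * X t \<ge> F' 0" if "t \<ge> 0" for t
  proof -
    let ?g = "\<lambda>t. (1+t) powr c * X t"
    let ?g' = "\<lambda>t. (1+t) powr (c-1) * (c * X t + (1+t) * X' t)"
    have "(?g has_real_derivative ?g' t) (at t within {0..})" if "t \<ge> 0" for t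
    proof -
      have "(?g has_real_derivative (c * (1+t) powr (c-1) * 1 * X t + (1+t) powr c * X' t)) (at t within {0..})"
        using that by (auto intro!: derivative_eq_intros DX powr_within)
      moreover have "(1+t) powr c = (1+t) powr (c-1) * (1+t)"
      proof -
        have "(1+t) powr ((c-1)+1) = (1+t) powr (c-1) * (1+t) powr 1" by (rule powr_add)
        thus ?thesis using that by simp
      qed
      ultimately show ?thesis by (simp add: algebra_simps)
    qed
    moreover have "?g' t \<ge> 0" if "t \<ge> 0" for t
    proof -
      have "c * X t + (1+t) * X' t \<ge> 0" using D[OF that] assms(2) by (smt (verit) powr_ge_zero mult_nonneg_nonneg)
      thus ?thesis by simp
    qed
    ultimately have "?g 0 \<le> ?g t" using mono_aux[of ?g ?g' 0 t] that by blast
    thus ?thesis by (simp add: X_def)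
  qed
  have Xpos: "X t > 0" if "t \<ge> 0" for t
  proof -
    have "(1+t) powr c * X t > 0" using g1[OF that] assms(10) by linarith
    moreover have "(1+t) powr c > 0" using that by simp
    ultimately show ?thesis by (simp add: zero_less_mult_iff)
  qed
  have F'pos: "F' t > 0" if "t \<ge> 0" for t
    using Xpos[OF that] that unfolding X_def by (simp add: zero_less_mult_iff)
  have Fmono: "F s \<le> F t" if "0 \<le> s" "s \<le> t" for s t
    using mono_aux[of F F' s t] F1 F'pos that by (meson less_imp_le order_trans)
  have Fpos: "F t \<ge> F 0" "F t > 0" if "t \<ge> 0" for t
    using Fmono[of 0 t] that assms(9) by auto
  have absF: "\<bar>F t\<bar> = F t" if "t \<ge> 0" for t using Fpos(2)[OF that] by simp
  define m where "m = (if c \<le> 0 then F' 0 else min (F' 0) (K1 * F 0 powr p / c))"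
  have mpos: "m > 0" unfolding m_def using assms(2,9,10) by auto
  have Xm: "X t \<ge> m" if "t \<ge> 0" for t
  proof (cases "c \<le> 0")
    case True
    have "(1+t) powr c \<le> 1" using that True
      by (smt (verit, ccfv_SIG) powr_mono powr_zero_eq_one)
    hence "(1+t) powr c * X t \<le> X t" using Xpos[OF that] by (simp add: mult_le_cancel_right1)
    thus ?thesis using g1[OF that] True unfolding m_def by simp
  next
    case False
    define L where "L = K1 * F 0 powr p / c"
    let ?g = "\<lambda>t. (1+t) powr c * (X t - L)"
    let ?g' = "\<lambda>t. (1+t) powr (c-1) * (c * (X t - L) + (1+t) * X' t)"
    have "(?g has_real_derivative ?g' t) (at t within {0..})" if "t \<ge> 0" for t
    proof -
      have "(?g has_real_derivative (c * (1+t) powr (c-1) * 1 * (X t - L) + (1+t) powr c * (X' t - 0))) (at t within {0..})"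
        using that by (auto intro!: derivative_eq_intros DX powr_within)
      moreover have "(1+t) powr c = (1+t) powr (c-1) * (1+t)"
      proof -
        have "(1+t) powr ((c-1)+1) = (1+t) powr (c-1) * (1+t) powr 1" by (rule powr_add)
        thus ?thesis using that by simp
      qed
      ultimately show ?thesis by (simp add: algebra_simps)
    qed
    moreover have "?g' t \<ge> 0" if "t \<ge> 0" for t
    proof -
      have "F 0 powr p \<le> F t powr p" using Fpos[OF that] assms(9,4) by (intro powr_mono2) auto
      hence "c * L \<le> K1 * F t powr p" unfolding L_def using False assms(2) by simp
      hence "c * (X t - L) + (1+t) * X' t \<ge> 0" using D[OF that] absF[OF that] by (simp add: algebra_simps)
      thus ?thesis by simp
    qed
    ultimately have "?g 0 \<le> ?g t" using mono_aux[of ?g ?g' 0 t] that by blast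
    hence G: "X 0 - L \<le> (1+t) powr c * (X t - L)" by simp
    show ?thesis
    proof (cases "X t \<ge> L")
      case True thus ?thesis unfolding m_def L_def using False by simp
    next
      case False2: False
      have "(1+t) powr c \<ge> 1" using that False by (simp add: ge_one_powr_ge_zero)
      hence "(1+t) powr c * (X t - L) \<le> 1 * (X t - L)" using False2
        by (intro mult_right_mono_neg) auto
      hence "X t \<ge> X 0" using G by simp
      thus ?thesis unfolding m_def X_def using False by simp
    qed
  qed
  have Flog: "F t \<ge> F 0 + m * ln (1+t)" if "t \<ge> 0" for t
  proof -
    let ?g = "\<lambda>t. F t - m * ln (1+t)"
    let ?g' = "\<lambda>t. F' t - m * (1 / (1+t))"
    have "(?g has_real_derivative ?g' t) (at t within {0..})" if "t \<ge> 0" for t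
      using that F1[OF that] by (auto intro!: derivative_eq_intros)
    moreover have "?g' t \<ge> 0" if "t \<ge> 0" for t
    proof -
      have "F' t = X t / (1+t)" unfolding X_def using that by simp
      hence "F' t \<ge> m / (1+t)" using Xm[OF that] that by (simp add: divide_right_mono)
      thus ?thesis by simp
    qed
    ultimately have "?g 0 \<le> ?g t" using mono_aux[of ?g ?g' 0 t] that by blast
    thus ?thesis by simp
  qed
  have Funb: "\<exists>t\<ge>s. F t \<ge> M" if "s \<ge> 0" for s M
  proof -
    define t where "t = max s (exp (M/m) - 1)"
    have t: "t \<ge> s" "t \<ge> 0" "1 + t \<ge> exp (M/m)" unfolding t_def using that by auto
    have "ln (exp (M/m)) \<le> ln (1+t)" using t(2,3) by (subst ln_le_cancel_iff) auto
    hence "ln (1+t) \<ge> M/m" by simp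
    hence "m * ln (1+t) \<ge> M" using mpos by (simp add: field_simps)
    hence "F t \<ge> M" using Flog[OF t(2)] assms(9) by linarith
    thus ?thesis using t by blast
  qed
  define q where "q = (p+1)/2"
  define a where "a = sqrt (K1 / (2*(p+1)))"
  have q: "q > 1" "q < p" "(q - 1) + q = p" "q + q = p + 1" using assms(4) unfolding q_def by (auto simp: field_simps)
  have apos: "a > 0" unfolding a_def using assms(2,4) by simp
  have a2: "a * a = K1 / (2*(p+1))" unfolding a_def using assms(2,4) by simp
  have a2q: "a * a * q = K1 / 4" unfolding a2 q_def using assms(4) by (simp add: field_simps)
  define R where "R = max 1 ((4*\<bar>c\<bar>*a/K1) powr (1/(p-q)))"
  have Rkey: "\<bar>c\<bar> * a * x powr q \<le> K1/4 * x powr p" if "x \<ge> R" for x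
  proof -
    have x1: "x \<ge> 1" using that unfolding R_def by simp
    have "x powr (p-q) \<ge> ((4*\<bar>c\<bar>*a/K1) powr (1/(p-q))) powr (p-q)"
      using that q unfolding R_def by (intro powr_mono2) auto
    also have "((4*\<bar>c\<bar>*a/K1) powr (1/(p-q))) powr (p-q) = 4*\<bar>c\<bar>*a/K1"
      using q apos assms(2) by (simp add: powr_powr)
    finally have h: "K1/4 * x powr (p-q) \<ge> \<bar>c\<bar> * a" using assms(2) by (simp add: field_simps)
    have "x powr p = x powr q * x powr (p-q)" using x1 by (simp add: powr_add[symmetric])
    hence "K1/4 * x powr p = x powr q * (K1/4 * x powr (p-q))" by simp
    also have "\<dots> \<ge> x powr q * (\<bar>c\<bar> * a)" using h by (intro mult_left_mono) auto
    finally show ?thesis by (simp add: mult_ac)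
  qed
  obtain t0 where t0: "t0 \<ge> 1" "F t0 \<ge> R" using Funb[of 1 R] by auto
  have FR: "F t \<ge> R" if "t \<ge> t0" for t using Fmono[of t0 t] t0 that by auto
  have cX: "c * X t \<le> K1/4 * F t powr p" if "t \<ge> t0" "X t \<le> a * F t powr q" for t
  proof -
    have "c * X t \<le> \<bar>c\<bar> * X t" using Xpos[of t] that t0 by (simp add: mult_right_mono)
    also have "\<dots> \<le> \<bar>c\<bar> * (a * F t powr q)" using that by (simp add: mult_left_mono)
    also have "\<dots> \<le> K1/4 * F t powr p" using Rkey[OF FR[OF that(1)]] by (simp add: mult_ac)
    finally show ?thesis .
  qed
  define \<psi> where "\<psi> t = X t - a * F t powr q" for t
  define \<psi>' where "\<psi>' t = X' t - a * (q * F t powr (q-1) * F' t)" for t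
  have D\<psi>: "(\<psi> has_real_derivative \<psi>' t) (at t within {0..})" if "t \<ge> 0" for t
    unfolding \<psi>_def[abs_def] \<psi>'_def using that Fpos[OF that]
    by (auto intro!: derivative_eq_intros DX powr_within F1)
  have \<psi>'pos: "\<psi>' t > 0" if "t \<ge> t0" "\<psi> t \<le> 0" for t
  proof -
    have t: "t \<ge> 0" using that t0 by auto
    have Xa: "X t \<le> a * F t powr q" using that unfolding \<psi>_def by simp
    have FX: "(1+t) * F' t = X t" unfolding X_def by simp
    have "(1+t) * \<psi>' t = (1+t) * X' t - a * q * F t powr (q-1) * X t"
      unfolding \<psi>'_def FX[symmetric] by (simp add: algebra_simps)
    moreover have "a * q * F t powr (q-1) * X t \<le> a * q * F t powr (q-1) * (a * F t powr q)"
      using Xa apos q by (intro mult_left_mono) auto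
    moreover have "a * q * F t powr (q-1) * (a * F t powr q) = K1/4 * F t powr p"
    proof -
      have "F t powr (q-1) * F t powr q = F t powr p" using q Fpos[OF t] by (simp add: powr_add[symmetric])
      thus ?thesis using a2q by (metis (no_types, lifting) mult.assoc mult.left_commute)
    qed
    moreover have "(1+t) * X' t \<ge> K1 * F t powr p - c * X t" using D[OF t] absF[OF t] by simp
    moreover have "c * X t \<le> K1/4 * F t powr p" using cX that Xa by simp
    moreover have "K1 * F t powr p > 0" using Fpos[OF t] assms(2) by simp
    ultimately have "(1+t) * \<psi>' t > 0" by linarith
    thus ?thesis using t by (simp add: zero_less_mult_iff)
  qed
  show False
  proof (cases "\<exists>t1\<ge>t0. \<psi> t1 > 0")
    case True
    then obtain t1 where t1: "t1 \<ge> t0" "\<psi> t1 > 0" by auto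
    have t10: "t1 \<ge> 0" using t1 t0 by auto
    have pers: "\<psi> t > 0" if "t \<ge> t1" for t
      using persist_aux[of \<psi> \<psi>' t1 t] D\<psi> \<psi>'pos t1 t10 that by auto
    let ?H = "\<lambda>t. - (F t powr (1-q) + (q-1)*a*ln (1+t))"
    let ?H' = "\<lambda>t. - ((1-q) * F t powr ((1-q) - 1) * F' t + (q-1)*a*(1/(1+t)))"
    have "(?H has_real_derivative ?H' t) (at t within {0..})" if "t \<ge> 0" for t
      using that Fpos[OF that] by (auto intro!: derivative_eq_intros powr_within F1)
    moreover have "?H' t \<ge> 0" if "t \<ge> t1" for t
    proof -
      have t: "t \<ge> 0" using that t10 by auto
      have Xa: "X t > a * F t powr q" using pers[OF that] unfolding \<psi>_def by simp
      have e: "F t powr ((1-q) - 1) * F t powr q = 1"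
        using Fpos[OF t] by (simp add: powr_add[symmetric])
      have "F t powr ((1-q) - 1) * X t \<ge> F t powr ((1-q) - 1) * (a * F t powr q)"
        using Xa by (intro mult_left_mono) auto
      hence "F t powr ((1-q) - 1) * X t \<ge> a" using e by (simp add: mult_ac)
      hence "(q-1) * (F t powr ((1-q) - 1) * X t) \<ge> (q-1) * a" using q by (intro mult_left_mono) auto
      moreover have "(1+t) * ?H' t = (q-1) * (F t powr ((1-q) - 1) * ((1+t) * F' t)) - (q-1)*a"
        using t by (simp add: field_simps)
      moreover have "(1+t) * F' t = X t" unfolding X_def by simp
      ultimately have "(1+t) * ?H' t \<ge> 0" by simp
      thus ?thesis using t by (simp add: zero_le_mult_iff)
    qed
    ultimately have Hm: "?H t1 \<le> ?H t" if "t \<ge> t1" for t using mono_aux[of ?H ?H' t1 t] t10 that by blast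
    define C where "C = F t1 powr (1-q) + (q-1)*a*ln (1+t1)"
    define t where "t = max t1 (exp (C/((q-1)*a) + 1) - 1)"
    have t: "t \<ge> t1" "t \<ge> 0" "1 + t \<ge> exp (C/((q-1)*a) + 1)" unfolding t_def using t10 by auto
    have "ln (exp (C/((q-1)*a) + 1)) \<le> ln (1+t)" using t(2,3) by (subst ln_le_cancel_iff) auto
    hence "ln (1+t) \<ge> C/((q-1)*a) + 1" by simp
    hence "(q-1)*a*ln (1+t) \<ge> (q-1)*a*(C/((q-1)*a) + 1)" using q apos by (intro mult_left_mono) auto
    also have "(q-1)*a*(C/((q-1)*a) + 1) = C + (q-1)*a" using q apos by (simp add: field_simps)
    finally have "(q-1)*a*ln (1+t) > C" using q apos by (smt (verit) mult_pos_pos)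
    moreover have "F t powr (1-q) + (q-1)*a*ln (1+t) \<le> C" using Hm[OF t(1)] unfolding C_def by simp
    moreover have "F t powr (1-q) > 0" using Fpos[OF t(2)] by simp
    ultimately show False by linarith
  next
    case False
    hence neg: "\<psi> t \<le> 0" if "t \<ge> t0" for t using that by auto
    let ?E = "\<lambda>t. X t ^ 2 - K1/(p+1) * F t powr (p+1)"
    let ?E' = "\<lambda>t. 2 * X t * X' t - K1/(p+1) * ((p+1) * F t powr ((p+1) - 1) * F' t)"
    have "(?E has_real_derivative ?E' t) (at t within {0..})" if "t \<ge> 0" for t
      using that Fpos[OF that] by (auto intro!: derivative_eq_intros powr_within F1 DX)
    moreover have "?E' t \<ge> 0" if "t \<ge> t0" for t
    proof -
      have t: "t \<ge> 0" using that t0 by auto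
      have Xa: "X t \<le> a * F t powr q" using neg[OF that] unfolding \<psi>_def by simp
      have FX: "(1+t) * F' t = X t" unfolding X_def by simp
      have "(1+t) * ?E' t = 2 * X t * ((1+t) * X' t) - K1 * F t powr p * X t"
        unfolding FX[symmetric] using assms(4) by (simp add: field_simps)
      moreover have "(1+t) * X' t \<ge> 3/4 * K1 * F t powr p"
        using D[OF t] absF[OF t] cX[OF that Xa] by simp
      hence "2 * X t * ((1+t) * X' t) \<ge> 2 * X t * (3/4 * K1 * F t powr p)"
        using Xpos[OF t] by (intro mult_left_mono) auto
      moreover have "2 * X t * (3/4 * K1 * F t powr p) - K1 * F t powr p * X t \<ge> 0"
      proof -
        have "K1 * F t powr p * X t \<ge> 0" using Xpos[OF t] assms(2) by simp
        moreover have "2 * X t * (3/4 * K1 * F t powr p) - K1 * F t powr p * X t = 1/2 * (K1 * F t powr p * X t)"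
          by (simp add: algebra_simps)
        ultimately show ?thesis by (simp add: mult_ac)
      qed
      ultimately have "(1+t) * ?E' t \<ge> 0" by linarith
      thus ?thesis using t by (simp add: zero_le_mult_iff)
    qed
    ultimately have Em: "?E t0 \<le> ?E t" if "t \<ge> t0" for t
      using mono_aux[of ?E ?E' t0 t] t0 that by auto
    obtain t2 where t2: "t2 \<ge> t0" "F t2 \<ge> 4 * F t0" using Funb[of t0 "4 * F t0"] t0 by auto
    have t20: "t2 \<ge> 0" "t0 \<ge> 0" using t2 t0 by auto
    define A where "A = F t2 powr (p+1)"
    define B where "B = F t0 powr (p+1)"
    have "F t0 powr p \<le> F t2 powr p" using Fmono[of t0 t2] t2 t0 assms(4) Fpos[OF t20(2)]
      by (intro powr_mono2) auto
    hence "(4 * F t0) * F t0 powr p \<le> F t2 * F t2 powr p"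
      using t2 Fpos[OF t20(2)] Fpos[OF t20(1)] by (intro mult_mono) auto
    hence "F t0 * F t0 powr p * 4 \<le> F t2 * F t2 powr p" by (simp add: mult_ac)
    moreover have "A = F t2 * F t2 powr p" unfolding A_def using Fpos[OF t20(1)] by (simp add: powr_add)
    moreover have "B = F t0 * F t0 powr p" unfolding B_def using Fpos[OF t20(2)] by (simp add: powr_add)
    ultimately have AB: "4 * B \<le> A" by simp
    have "X t0 ^ 2 \<ge> 0" by simp
    hence "X t2 ^ 2 - K1/(p+1) * A \<ge> - K1/(p+1) * B" using Em[OF t2(1)] unfolding A_def B_def
      by linarith
    moreover have "K1/(p+1)*(A-B) = K1/(p+1)*A - K1/(p+1)*B" by (rule right_diff_distrib)
    ultimately have E2: "X t2 ^ 2 \<ge> K1/(p+1) * (A - B)" by linarith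
    have Xa: "X t2 \<le> a * F t2 powr q" using neg[OF t2(1)] unfolding \<psi>_def by simp
    have "X t2 ^ 2 \<le> (a * F t2 powr q)^2" using Xa Xpos[OF t20(1)] by (intro power_mono) auto
    also have "(a * F t2 powr q)^2 = a * a * (F t2 powr q * F t2 powr q)" by (simp add: power2_eq_square mult_ac)
    also have "F t2 powr q * F t2 powr q = A" unfolding A_def using q Fpos[OF t20(1)] by (simp add: powr_add[symmetric])
    finally have "X t2 ^ 2 \<le> K1 / (2*(p+1)) * A" using a2 by simp
    moreover have "A > 0" unfolding A_def using Fpos[OF t20(1)] by simp
    moreover have "K1/(p+1) > 0" using assms(2,4) by simp
    ultimately have "K1/(p+1) * (A - B) \<le> K1/(p+1) * (A / 2)" using E2 by (simp add: field_simps)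
    hence "A - B \<le> A/2" using mult_le_cancel_left_pos[OF \<open>K1/(p+1) > 0\<close>] by blast
    thus False using AB \<open>A > 0\<close> by linarith
  qed
qed

end
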